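(* Suppose there is a function $f:\mathbb{N}\to\mathbb{R}$ with $\lim_{n\to\infty} f(n)=\infty$ such that for every $n$, every instance with $n$ agents (with monotone valuations) and exactly $m=n+\lfloor f(n)\rfloor$ goods admits an EFX allocation. Then for every $n$ and $m$, every instance with $n$ agents (with monotone valuations) and $m$ goods admits an EFX allocation. *)

theory Defs
  imports Complex_Main
begin

definition monotone_valuation :: "nat \<Rightarrow> (nat set \<Rightarrow> real) \<Rightarrow> bool" where
  "monotone_valuation m v \<longleftrightarrow> (\<forall>S T. S \<subseteq> T \<longrightarrow> T \<subseteq> {..<m} \<longrightarrow> v S \<le> v T)"

definition is_allocation :: "nat \<Rightarrow> nat \<Rightarrow> (nat \<Rightarrow> nat set) \<Rightarrow> bool" where
  "is_allocation n m X \<longleftrightarrow>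
     (\<forall>i<n. X i \<subseteq> {..<m}) \<and>
     (\<forall>i<n. \<forall>j<n. i \<noteq> j \<longrightarrow> X i \<inter> X j = {}) \<and>
     (\<Union>i<n. X i) = {..<m}"

definition is_EFX :: "nat \<Rightarrow> (nat \<Rightarrow> nat set \<Rightarrow> real) \<Rightarrow> (nat \<Rightarrow> nat set) \<Rightarrow> bool" where
  "is_EFX n v X \<longleftrightarrow>
     (\<forall>i<n. \<forall>j<n. i \<noteq> j \<longrightarrow> (\<forall>g\<in>X j. v i (X j - {g}) \<le> v i (X i)))"

definition admits_EFX :: "nat \<Rightarrow> nat \<Rightarrow> (nat \<Rightarrow> nat set \<Rightarrow> real) \<Rightarrow> bool" where
  "admits_EFX n m v \<longleftrightarrow> (\<exists>X. is_allocation n m X \<and> is_EFX n v X)"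

definition EFX_exists :: "nat \<Rightarrow> nat \<Rightarrow> bool" where
  "EFX_exists n m \<longleftrightarrow>
     (\<forall>v. (\<forall>i<n. monotone_valuation m (v i)) \<longrightarrow> admits_EFX n m v)"

end

theory Submission
  imports Defs
begin

lemma junk:
  assumes "EFX_exists n m'" "m \<le> m'"
  shows "EFX_exists n m"
  unfolding EFX_exists_def
proof (intro allI impI)
  fix v :: "nat \<Rightarrow> nat set \<Rightarrow> real"
  assume mono: "\<forall>i<n. monotone_valuation m (v i)"
  define v' where "v' i S = v i (S \<inter> {..<m})" for i S
  have "\<forall>i<n. monotone_valuation m' (v' i)"
    using mono unfolding monotone_valuation_def v'_def
    by (metis Int_mono Int_lower2 order_refl)
  then obtain X where X: "is_allocation n m' X" "is_EFX n v' X"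
    using assms(1) unfolding EFX_exists_def admits_EFX_def by blast
  define Y where "Y i = X i \<inter> {..<m}" for i
  have "is_allocation n m Y"
  proof -
    have u: "(\<Union>i<n. X i) = {..<m'}" using X(1) unfolding is_allocation_def by blast
    have "(\<Union>i<n. Y i) = (\<Union>i<n. X i) \<inter> {..<m}" unfolding Y_def by blast
    also have "... = {..<m}" using u assms(2) by auto
    finally show ?thesis using X(1) unfolding is_allocation_def Y_def by blast
  qed
  moreover have "is_EFX n v Y"
    unfolding is_EFX_def
  proof (intro allI impI ballI)
    fix i j g assume ij: "i < n" "j < n" "i \<noteq> j" and g: "g \<in> Y j"
    then have "v' i (X j - {g}) \<le> v' i (X i)" using X(2) unfolding is_EFX_def Y_def by blast
    moreover have "(X j - {g}) \<inter> {..<m} = Y j - {g}" unfolding Y_def by blast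
    ultimately show "v i (Y j - {g}) \<le> v i (Y i)" unfolding v'_def Y_def by simp
  qed
  ultimately show "admits_EFX n m v" unfolding admits_EFX_def by blast
qed

lemma agents:
  assumes n1: "1 \<le> n" and nN: "n \<le> N" and ex: "EFX_exists N (m + (N - n))"
  shows "EFX_exists n m"
  unfolding EFX_exists_def
proof (intro allI impI)
  fix v :: "nat \<Rightarrow> nat set \<Rightarrow> real"
  assume mono: "\<forall>i<n. monotone_valuation m (v i)"
  define M where "M = m + (N - n)"
  define D where "D = {m..<M}"
  define ty where "ty p = (if p < n then p else 0)" for p :: nat
  define H where "H = v 0 {..<m} - v 0 {} + 1"
  define V where "V p S = v (ty p) (S \<inter> {..<m}) + (if ty p = 0 \<and> S \<inter> D \<noteq> {} then H else 0)" for p S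
  have ty_lt: "ty p < n" for p using n1 unfolding ty_def by auto
  have monov: "v i S \<le> v i T" if "i < n" "S \<subseteq> T" "T \<subseteq> {..<m}" for i S T
    using mono that unfolding monotone_valuation_def by blast
  have Hpos: "H > 0" using monov[of 0 "{}" "{..<m}"] n1 unfolding H_def by auto
  have "\<forall>p<N. monotone_valuation M (V p)"
    unfolding monotone_valuation_def
  proof (intro allI impI)
    fix p S T assume "p < N" "S \<subseteq> T" "T \<subseteq> {..<M}"
    have "v (ty p) (S \<inter> {..<m}) \<le> v (ty p) (T \<inter> {..<m})"
      by (rule monov[OF ty_lt]) (use \<open>S \<subseteq> T\<close> in auto)
    moreover have "(if ty p = 0 \<and> S \<inter> D \<noteq> {} then H else 0) \<le> (if ty p = 0 \<and> T \<inter> D \<noteq> {} then H else 0)"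
      using \<open>S \<subseteq> T\<close> Hpos by auto
    ultimately show "V p S \<le> V p T" unfolding V_def by linarith
  qed
  then have "admits_EFX N M V" using ex unfolding EFX_exists_def M_def by simp
  then obtain X where alloc: "is_allocation N M X" and efx: "is_EFX N V X"
    unfolding admits_EFX_def by blast
  have Xsub: "X p \<subseteq> {..<M}" if "p < N" for p using alloc that unfolding is_allocation_def by blast
  have Xdisj: "X p \<inter> X q = {}" if "p < N" "q < N" "p \<noteq> q" for p q using alloc that unfolding is_allocation_def by blast
  have Xun: "(\<Union>p<N. X p) = {..<M}" using alloc unfolding is_allocation_def by blast
  have Xefx: "V p (X q - {g}) \<le> V p (X p)" if "p < N" "q < N" "p \<noteq> q" "g \<in> X q" for p q g
    using efx that unfolding is_EFX_def by blast
  define K0 where "K0 = {p. p < N \<and> ty p = 0}"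
  have K0eq: "K0 = insert 0 {n..<N}" using n1 nN unfolding K0_def ty_def by auto
  have cardK0: "card K0 = N - n + 1" using n1 unfolding K0eq by simp
  have cardD: "card D = N - n" unfolding D_def M_def by simp
  obtain \<beta> where \<beta>: "\<beta> < N" "ty \<beta> = 0" "X \<beta> \<inter> D = {}"
  proof (rule ccontr)
    assume "\<not> thesis"
    then have ne: "\<forall>p\<in>K0. X p \<inter> D \<noteq> {}" using that unfolding K0_def by blast
    define c where "c p = (SOME d. d \<in> X p \<inter> D)" for p
    have c: "c p \<in> X p \<inter> D" if "p \<in> K0" for p unfolding c_def by (rule someI_ex) (use ne that in blast)
    have "inj_on c K0"
    proof (rule inj_onI)
      fix p q assume "p \<in> K0" "q \<in> K0" "c p = c q"
      show "p = q"
      proof (rule ccontr)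
        assume "p \<noteq> q"
        moreover have "p < N" "q < N" using \<open>p \<in> K0\<close> \<open>q \<in> K0\<close> unfolding K0_def by auto
        ultimately have "X p \<inter> X q = {}" by (rule_tac Xdisj) auto
        moreover have "c p \<in> X p" "c q \<in> X q" using c \<open>p \<in> K0\<close> \<open>q \<in> K0\<close> by auto
        ultimately show False using \<open>c p = c q\<close> by auto
      qed
    qed
    moreover have "c ` K0 \<subseteq> D" using c by auto
    moreover have "finite D" unfolding D_def by simp
    ultimately have "card K0 \<le> card D" by (rule card_inj_on_le)
    then show False using cardK0 cardD by simp
  qed
  have single: "\<exists>d\<in>D. X p = {d}" if pN: "p < N" and pD: "X p \<inter> D \<noteq> {}" for p
  proof -
    obtain d where d: "d \<in> X p" "d \<in> D" using pD by blast
    have "p \<noteq> \<beta>" using \<beta>(3) d by blast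
    have "X p \<subseteq> {d}"
    proof
      fix g assume g: "g \<in> X p"
      show "g \<in> {d}"
      proof (rule ccontr)
        assume "g \<notin> {d}"
        then have dd: "d \<in> (X p - {g}) \<inter> D" using d by blast
        have "V \<beta> (X p - {g}) \<le> V \<beta> (X \<beta>)" using Xefx[of \<beta> p g] \<beta>(1) pN \<open>p \<noteq> \<beta>\<close> g by auto
        moreover have "V \<beta> (X p - {g}) = v 0 ((X p - {g}) \<inter> {..<m}) + H"
          using dd \<beta>(2) unfolding V_def by auto
        moreover have "V \<beta> (X \<beta>) = v 0 (X \<beta> \<inter> {..<m})" using \<beta>(2,3) unfolding V_def by simp
        moreover have "v 0 {} \<le> v 0 ((X p - {g}) \<inter> {..<m})" using monov[of 0] n1 by auto
        moreover have "v 0 (X \<beta> \<inter> {..<m}) \<le> v 0 {..<m}" using monov[of 0] n1 by auto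
        ultimately show False unfolding H_def by linarith
      qed
    qed
    then show ?thesis using d by blast
  qed
  define P where "P = {p. p < N \<and> X p \<inter> D = {}}"
  define Q where "Q = {p. p < N \<and> X p \<inter> D \<noteq> {}}"
  have "bij_betw (\<lambda>p. the_elem (X p)) Q D"
  proof (rule bij_betw_imageI)
    show "inj_on (\<lambda>p. the_elem (X p)) Q"
    proof (rule inj_onI)
      fix p q assume pq: "p \<in> Q" "q \<in> Q" "the_elem (X p) = the_elem (X q)"
      obtain d where "X p = {d}" using single pq(1) unfolding Q_def by blast
      obtain e where "X q = {e}" using single pq(2) unfolding Q_def by blast
      show "p = q" using pq Xdisj[of p q] \<open>X p = {d}\<close> \<open>X q = {e}\<close> unfolding Q_def by auto
    qed
    show "(\<lambda>p. the_elem (X p)) ` Q = D"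
    proof
      show "(\<lambda>p. the_elem (X p)) ` Q \<subseteq> D" using single unfolding Q_def by fastforce
      show "D \<subseteq> (\<lambda>p. the_elem (X p)) ` Q"
      proof
        fix d assume "d \<in> D"
        then have "d \<in> {..<M}" unfolding D_def by auto
        then obtain p where p: "p < N" "d \<in> X p" using Xun by blast
        then have "p \<in> Q" using \<open>d \<in> D\<close> unfolding Q_def by blast
        then obtain e where "X p = {e}" using single unfolding Q_def by blast
        then have "d = the_elem (X p)" using p by simp
        then show "d \<in> (\<lambda>p. the_elem (X p)) ` Q" using \<open>p \<in> Q\<close> by (rule image_eqI)
      qed
    qed
  qed
  then have "card Q = N - n" using cardD bij_betw_same_card by metis
  moreover have "P = {..<N} - Q" unfolding P_def Q_def by auto
  moreover have "Q \<subseteq> {..<N}" unfolding Q_def by auto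
  ultimately have cardP: "card P = n" using nN by (simp add: card_Diff_subset finite_subset)
  have PsubN: "P \<subseteq> {..<N}" unfolding P_def by auto
  have Psub: "X p \<subseteq> {..<m}" if "p \<in> P" for p
  proof
    fix x assume x: "x \<in> X p"
    have "p < N" "X p \<inter> D = {}" using that unfolding P_def by auto
    then have "x < M" "x \<notin> D" using x Xsub by auto
    then show "x \<in> {..<m}" unfolding D_def by auto
  qed
  define a where "a t = (if t = 0 then \<beta> else t)" for t
  have a_lt: "a t < N" if "t < n" for t using that nN \<beta>(1) unfolding a_def by auto
  have ty_a: "ty (a t) = t" if "t < n" for t using that \<beta>(2) unfolding a_def ty_def by auto
  have a_inj: "inj_on a {..<n}"
    by (rule inj_on_inverseI[where g = ty]) (simp add: ty_a)
  define I where "I = {t. t < n \<and> a t \<in> P}"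
  define J where "J = {..<n} - I"
  define R where "R = P - a ` I"
  have aI: "a ` I \<subseteq> P" unfolding I_def by auto
  have IsubN: "I \<subseteq> {..<n}" unfolding I_def by auto
  have cardaI: "card (a ` I) = card I" using inj_on_subset[OF a_inj IsubN] by (rule card_image)
  have finP: "finite P" using finite_subset[OF PsubN] by simp
  have cardR: "card R = n - card I" unfolding R_def using aI cardaI cardP finP
    by (simp add: card_Diff_subset finite_subset)
  have cardJ: "card J = n - card I" unfolding J_def using IsubN
    by (simp add: card_Diff_subset finite_subset)
  have finJ: "finite J" unfolding J_def by simp
  have finR: "finite R" unfolding R_def using finP by simp
  obtain h where h: "bij_betw h J R"
    using finite_same_card_bij[OF finJ finR] cardR cardJ by auto
  define \<sigma> where "\<sigma> t = (if t \<in> I then a t else h t)" for t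
  have ba: "bij_betw a I (a ` I)" using inj_on_subset[OF a_inj IsubN] by (simp add: bij_betw_def)
  have "bij_betw (\<lambda>t. if t \<in> I then a t else h t) (I \<union> J) (a ` I \<union> R)"
    by (rule bij_betw_disjoint_Un[OF ba h]) (auto simp: J_def R_def)
  moreover have "I \<union> J = {..<n}" unfolding J_def using IsubN by auto
  moreover have "a ` I \<union> R = P" unfolding R_def using aI by auto
  ultimately have sbij: "bij_betw \<sigma> {..<n} P" unfolding \<sigma>_def by simp
  have sP: "\<sigma> t \<in> P" if "t < n" for t using sbij that by (auto simp: bij_betw_def)
  have sinj: "\<sigma> s = \<sigma> t \<Longrightarrow> s < n \<Longrightarrow> t < n \<Longrightarrow> s = t" for s t
    using sbij by (auto simp: bij_betw_def inj_on_def)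
  have sa: "\<sigma> t = a t" if "t < n" "a t \<in> P" for t using that unfolding \<sigma>_def I_def by auto
  have notI: "X (a t) \<inter> {..<m} = {}" if tn: "t < n" and tP: "a t \<notin> P" for t
  proof -
    have "X (a t) \<inter> D \<noteq> {}" using tP a_lt[OF tn] unfolding P_def by auto
    then obtain d where "d \<in> D" "X (a t) = {d}" using single a_lt[OF tn] by blast
    then show ?thesis unfolding D_def by auto
  qed
  define Y where "Y t = X (\<sigma> t)" for t
  have "is_allocation n m Y"
    unfolding is_allocation_def
  proof (intro conjI allI impI)
    fix t assume "t < n" then show "Y t \<subseteq> {..<m}" unfolding Y_def using sP Psub by blast
  next
    fix s t assume "s < n" "t < n" "s \<noteq> t"
    then show "Y s \<inter> Y t = {}" unfolding Y_def using sinj Xdisj sP PsubN by blast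
  next
    have im: "\<sigma> ` {..<n} = P" using sbij by (simp add: bij_betw_def)
    have "(\<Union>t<n. Y t) = (\<Union>p\<in>\<sigma> ` {..<n}. X p)" unfolding Y_def by (simp add: image_image)
    then have "(\<Union>t<n. Y t) = (\<Union>p\<in>P. X p)" by (simp only: im)
    also have "... = {..<m}"
    proof
      show "(\<Union>p\<in>P. X p) \<subseteq> {..<m}" using Psub by blast
      show "{..<m} \<subseteq> (\<Union>p\<in>P. X p)"
      proof
        fix g assume g: "g \<in> {..<m}"
        then have "g \<in> {..<M}" unfolding M_def by auto
        then obtain p where p: "p < N" "g \<in> X p" using Xun by blast
        have "p \<in> P"
        proof (rule ccontr)
          assume "p \<notin> P"
          then have "X p \<inter> D \<noteq> {}" using p unfolding P_def by auto
          then obtain d where "d \<in> D" "X p = {d}" using single p(1) by blast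
          then show False using g p unfolding D_def by auto
        qed
        then show "g \<in> (\<Union>p\<in>P. X p)" using p by blast
      qed
    qed
    finally show "(\<Union>t<n. Y t) = {..<m}" .
  qed
  moreover have "is_EFX n v Y"
    unfolding is_EFX_def
  proof (intro allI impI ballI)
    fix t s g assume ts: "t < n" "s < n" "t \<noteq> s" and g: "g \<in> Y s"
    have ne: "\<sigma> s \<noteq> a t"
    proof
      assume eq: "\<sigma> s = a t"
      then have "a t \<in> P" using sP ts by metis
      then have "\<sigma> t = \<sigma> s" using sa ts eq by simp
      then show False using sinj ts by metis
    qed
    have sN: "\<sigma> s < N" using sP PsubN ts by blast
    have e1: "V (a t) (X (\<sigma> s) - {g}) \<le> V (a t) (X (a t))"
      using Xefx[OF a_lt[OF ts(1)] sN ne[symmetric]] g unfolding Y_def by blast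
    have sub1: "X (\<sigma> s) \<subseteq> {..<m}" using Psub sP ts by blast
    have "X (\<sigma> s) \<inter> D = {}" using sP ts unfolding P_def by auto
    then have i2: "(X (\<sigma> s) - {g}) \<inter> D = {}" by blast
    have i1: "(X (\<sigma> s) - {g}) \<inter> {..<m} = X (\<sigma> s) - {g}" using sub1 by blast
    have e2: "V (a t) (X (\<sigma> s) - {g}) = v t (X (\<sigma> s) - {g})"
      unfolding V_def ty_a[OF ts(1)] i1 i2 by simp
    have e3: "V (a t) (X (a t)) = v t (X (a t) \<inter> {..<m})"
    proof (cases "t = 0")
      case True
      then show ?thesis using \<beta>(3) ty_a[OF ts(1)] unfolding V_def a_def by simp
    next
      case False
      then show ?thesis using ty_a[OF ts(1)] unfolding V_def by simp
    qed
    have e4: "v t (X (a t) \<inter> {..<m}) \<le> v t (X (\<sigma> t))"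
    proof (cases "a t \<in> P")
      case True
      then have "X (a t) \<inter> {..<m} = X (\<sigma> t)" using sa ts Psub by auto
      then show ?thesis by simp
    next
      case False
      then show ?thesis using notI[OF ts(1) False] monov[OF ts(1), of "{}" "X (\<sigma> t)"]
        Psub sP ts by auto
    qed
    show "v t (Y s - {g}) \<le> v t (Y t)" using e1 e2 e3 e4 unfolding Y_def by linarith
  qed
  ultimately show "admits_EFX n m v" unfolding admits_EFX_def by blast
qed

theorem theorem2:
  fixes f :: "nat \<Rightarrow> real"
  assumes "filterlim f at_top sequentially"
    and "\<forall>n\<ge>1. \<forall>m::nat. int m = int n + \<lfloor>f n\<rfloor> \<longrightarrow> EFX_exists n m"
  shows "\<forall>n\<ge>1. \<forall>m. EFX_exists n m"
proof (intro allI impI)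
  fix n m :: nat assume n1: "n \<ge> 1"
  have "\<forall>\<^sub>F N in sequentially. real m \<le> f N" using assms(1) by (simp add: filterlim_at_top)
  moreover have "\<forall>\<^sub>F N in sequentially. n \<le> N" by (rule eventually_ge_at_top)
  ultimately have "\<forall>\<^sub>F N in sequentially. real m \<le> f N \<and> n \<le> N" by eventually_elim auto
  then obtain N0 where "\<forall>k\<ge>N0. real m \<le> f k \<and> n \<le> k" unfolding eventually_sequentially by blast
  then have N: "real m \<le> f N0" "n \<le> N0" by auto
  define M where "M = N0 + nat \<lfloor>f N0\<rfloor>"
  have fl: "\<lfloor>f N0\<rfloor> \<ge> int m" using N(1) by (simp add: le_floor_iff)
  have "0 \<le> \<lfloor>f N0\<rfloor>" using fl by linarith
  then have "int (nat \<lfloor>f N0\<rfloor>) = \<lfloor>f N0\<rfloor>" by simp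
  then have "int M = int N0 + \<lfloor>f N0\<rfloor>" unfolding M_def by simp
  then have "EFX_exists N0 M" using assms(2) N(2) n1 by auto
  moreover have "m + (N0 - n) \<le> M" using fl N(2) unfolding M_def by linarith
  ultimately have "EFX_exists N0 (m + (N0 - n))" by (rule junk)
  then show "EFX_exists n m" using agents n1 N(2) by blast
qed

end
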